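(* Let $X$ be an $m\times m$ Hermitian positive definite matrix and $n\ge1$ an integer. Then the function $f_{X,n}(Y):=\operatorname{tr}\{(XY^{-1})^n\}$ is strictly convex on the set of $m\times m$ Hermitian positive definite matrices $Y$. *)

theory Defs
  imports "HOL-Analysis.Analysis"
begin

text \<open>Square complex matrices of size m are modelled as complex^'m^'m, with the
  finite type 'm of cardinality m.\<close>

definition conj_transpose :: "complex^'m^'n \<Rightarrow> complex^'n^'m" where
  "conj_transpose A = (\<chi> i j. cnj (A $ j $ i))"

definition hermitian_mat :: "complex^'n^'n \<Rightarrow> bool" where
  "hermitian_mat A \<longleftrightarrow> conj_transpose A = A"

definition pos_def_mat :: "complex^'n^'n \<Rightarrow> bool" where
  "pos_def_mat A \<longleftrightarrow> hermitian_mat A \<and>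
     (\<forall>x::complex^'n. x \<noteq> 0 \<longrightarrow> Re (\<Sum>i\<in>UNIV. cnj (x $ i) * (A *v x) $ i) > 0)"

text \<open>Matrix power with respect to matrix multiplication (the ring operations on
  vec are componentwise, so the ordinary power cannot be used).\<close>
fun mat_pow :: "'a::semiring_1^'n^'n \<Rightarrow> nat \<Rightarrow> 'a^'n^'n" where
  "mat_pow A 0 = mat 1"
| "mat_pow A (Suc k) = A ** mat_pow A k"

text \<open>f_{X,n}(Y) = tr((X Y^{-1})^n), taken as a real number (its real part; the
  trace is real for Hermitian positive definite X, Y).\<close>
definition f_Xn :: "complex^'m^'m \<Rightarrow> nat \<Rightarrow> complex^'m^'m \<Rightarrow> real" where
  "f_Xn X n Y = Re (trace (mat_pow (X ** matrix_inv Y) n))"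

definition strict_convex_on :: "'a::real_vector set \<Rightarrow> ('a \<Rightarrow> real) \<Rightarrow> bool" where
  "strict_convex_on S f \<longleftrightarrow> convex S \<and>
    (\<forall>x\<in>S. \<forall>y\<in>S. x \<noteq> y \<longrightarrow> (\<forall>u>0. \<forall>v>0. u + v = 1 \<longrightarrow>
        f (u *\<^sub>R x + v *\<^sub>R y) < u * f x + v * f y))"

end

theory Submission
  imports Defs
begin

definition ip :: "complex^'n \<Rightarrow> complex^'n \<Rightarrow> complex" where
  "ip x y = (\<Sum>i\<in>UNIV. cnj (x $ i) * y $ i)"

definition qf :: "complex^'n^'n \<Rightarrow> complex^'n \<Rightarrow> complex" where
  "qf A x = ip x (A *v x)"

definition psd :: "complex^'n^'n \<Rightarrow> bool" where
  "psd A \<longleftrightarrow> hermitian_mat A \<and> (\<forall>x. Re (qf A x) \<ge> 0)"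

lemma pd_iff: "pos_def_mat A \<longleftrightarrow> hermitian_mat A \<and> (\<forall>x. x \<noteq> 0 \<longrightarrow> Re (qf A x) > 0)"
  by (simp add: pos_def_mat_def qf_def ip_def)

lemma ct_nth[simp]: "conj_transpose A $ i $ j = cnj (A $ j $ i)"
  by (simp add: conj_transpose_def)

lemma ct_ct[simp]: "conj_transpose (conj_transpose A) = A"
  by (simp add: vec_eq_iff)

lemma ct_mult: "conj_transpose (A ** B) = conj_transpose B ** conj_transpose A"
  by (simp add: vec_eq_iff matrix_matrix_mult_def mult.commute)

lemma ct_one[simp]: "conj_transpose (mat 1 :: complex^'n^'n) = mat 1"
  by (simp add: vec_eq_iff mat_def)

lemma ct_add: "conj_transpose (A + B) = conj_transpose A + conj_transpose B"
  by (simp add: vec_eq_iff)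

lemma ct_diff: "conj_transpose (A - B) = conj_transpose A - conj_transpose B"
  by (simp add: vec_eq_iff)

lemma ct_scaleR: "conj_transpose (c *\<^sub>R A) = c *\<^sub>R conj_transpose A"
  by (simp add: vec_eq_iff)

lemma ct_zero[simp]: "conj_transpose 0 = 0"
  by (simp add: vec_eq_iff)

lemma ip_mult_right: "ip x (S *v y) = ip (conj_transpose S *v x) y"
proof -
  have "ip x (S *v y) = (\<Sum>i\<in>UNIV. \<Sum>j\<in>UNIV. cnj (x $ i) * (S $ i $ j * y $ j))"
    by (simp add: ip_def matrix_vector_mult_def sum_distrib_left)
  also have "\<dots> = (\<Sum>j\<in>UNIV. \<Sum>i\<in>UNIV. cnj (x $ i) * (S $ i $ j * y $ j))"
    by (rule sum.swap)
  also have "\<dots> = ip (conj_transpose S *v x) y"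
    by (simp add: ip_def matrix_vector_mult_def sum_distrib_left mult_ac)
  finally show ?thesis .
qed

lemma qf_congr: "qf (S ** R ** conj_transpose S) x = qf R (conj_transpose S *v x)"
  by (simp add: qf_def ip_mult_right matrix_vector_mul_assoc[symmetric])

lemma ip_cnj: "cnj (ip x y) = ip y x"
  by (simp add: ip_def mult.commute)

lemma herm_qf_real: assumes "hermitian_mat A" shows "cnj (qf A x) = qf A x"
proof -
  have "cnj (qf A x) = ip (A *v x) x" by (simp add: qf_def ip_cnj)
  also have "\<dots> = cnj (ip x (A *v x))" by (simp add: ip_cnj)
  also have "\<dots> = cnj (ip (conj_transpose A *v x) x)" by (simp add: ip_mult_right)
  also have "\<dots> = ip x (conj_transpose A *v x)" by (simp add: ip_cnj)
  finally show ?thesis using assms by (simp add: qf_def hermitian_mat_def)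
qed

lemma ip_self: "ip x x = of_real (\<Sum>i\<in>UNIV. (cmod (x $ i))^2)"
proof -
  have "ip x x = (\<Sum>i\<in>UNIV. of_real ((cmod (x $ i))^2))"
    unfolding ip_def by (rule sum.cong, simp, metis complex_norm_square mult.commute of_real_power)
  then show ?thesis by simp
qed

lemma ip_self_pos: "x \<noteq> 0 \<Longrightarrow> Re (ip x x) > 0"
proof -
  assume "x \<noteq> 0"
  then obtain i where "x $ i \<noteq> 0" by (auto simp: vec_eq_iff)
  then have "(\<Sum>i\<in>UNIV. (cmod (x $ i))^2) > 0"
    by (intro sum_pos2[of _ i]) auto
  then show ?thesis by (simp add: ip_self)
qed

lemma matrix_inv_props:
  assumes "invertible A"
  shows "A ** matrix_inv A = mat 1" "matrix_inv A ** A = mat 1"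
  using someI_ex[OF assms[unfolded invertible_def]] by (auto simp: matrix_inv_def)

lemma pd_invertible:
  fixes A :: "complex^'n^'n"
  assumes "pos_def_mat A" shows "invertible A"
proof -
  have "\<forall>x. A *v x = 0 \<longrightarrow> x = 0"
  proof (intro allI impI)
    fix x assume "A *v x = 0"
    then have "qf A x = 0" by (simp add: qf_def ip_def)
    then show "x = 0" using assms by (auto simp: pd_iff)
  qed
  then have "\<exists>B. B ** A = mat 1" using matrix_left_invertible_ker by blast
  then show ?thesis using invertible_left_inverse by blast
qed

lemma sum_if_eq: "(\<Sum>i\<in>UNIV. if i = k then f i else 0) = f (k::'n::finite)"
  by (simp add: sum.delta)

lemma scaleR_mat_nth: "(c *\<^sub>R A) $ i $ j = of_real c * (A $ i $ j :: complex)"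
  unfolding vector_scaleR_component by (simp add: scaleR_conv_of_real)

lemma ip_add_right: "ip x (y + z) = ip x y + ip x z"
  by (simp add: ip_def sum.distrib algebra_simps)
lemma ip_add_left: "ip (x + y) z = ip x z + ip y z"
  by (simp add: ip_def sum.distrib algebra_simps)
lemma ip_scale_right: "ip x (c *s y) = c * ip x y"
  by (simp add: ip_def sum_distrib_left algebra_simps)
lemma ip_scale_left: "ip (c *s x) y = cnj c * ip x y"
  by (simp add: ip_def sum_distrib_left algebra_simps)
lemma ip_axis_left: "ip (axis k 1) y = y $ k"
proof -
  have "ip (axis k 1) y = (\<Sum>i\<in>UNIV. if i = k then y $ i else 0)"
    unfolding ip_def by (rule sum.cong) (auto simp: axis_def)
  then show ?thesis by (simp add: sum_if_eq)
qed
lemma ip_axis_right: "ip x (axis k 1) = cnj (x $ k)"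
proof -
  have "ip x (axis k 1) = (\<Sum>i\<in>UNIV. if i = k then cnj (x $ i) else 0)"
    unfolding ip_def by (rule sum.cong) (auto simp: axis_def)
  then show ?thesis by (simp add: sum_if_eq)
qed
lemma mv_axis: "((M::complex^'n^'n) *v axis j 1) $ a = M $ a $ j"
proof -
  have "(M *v axis j 1) $ a = (\<Sum>i\<in>UNIV. if i = j then M $ a $ i else 0)"
    unfolding matrix_vector_mult_def vec_lambda_beta by (rule sum.cong) (auto simp: axis_def)
  then show ?thesis by (simp add: sum_if_eq)
qed

lemma mv_add: "(M::complex^'n^'n) *v (x + y) = M *v x + M *v y"
  by (simp add: matrix_vector_right_distrib)
lemma mv_scale: "(M::complex^'n^'n) *v (c *s x) = c *s (M *v x)"
  by (simp add: vec_eq_iff matrix_vector_mult_def sum_distrib_left mult_ac)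

lemma qf_add: "qf M (x + y) = qf M x + qf M y + ip x (M *v y) + ip y (M *v x)"
  by (simp add: qf_def mv_add ip_add_left ip_add_right)
lemma qf_scale: "qf M (c *s x) = cnj c * c * qf M x"
  by (simp add: qf_def mv_scale ip_scale_left ip_scale_right)
lemma qf_axis: "qf M (axis k 1) = M $ k $ k"
  by (simp add: qf_def ip_axis_left mv_axis)

lemma qf_diff_mat: "qf (A - B) x = qf A x - qf B x"
  by (simp add: qf_def ip_def matrix_vector_mult_def sum_subtractf algebra_simps)
lemma qf_add_mat: "qf (A + B) x = qf A x + qf B x"
  by (simp add: qf_def ip_def matrix_vector_mult_def sum.distrib algebra_simps)
lemma qf_scaleR_mat: "qf (c *\<^sub>R A) x = of_real c * qf A x"
  by (simp add: qf_def ip_def matrix_vector_mult_def sum_distrib_left scaleR_mat_nth mult_ac del: vector_scaleR_component)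

lemma herm_entry: "hermitian_mat M \<Longrightarrow> M $ j $ i = cnj (M $ i $ j)"
  by (metis ct_nth hermitian_mat_def)

definition outer :: "complex^'n \<Rightarrow> complex^'n^'n" where
  "outer v = (\<chi> a b. v $ a * cnj (v $ b))"

lemma outer_herm: "hermitian_mat (outer v)"
  by (simp add: hermitian_mat_def outer_def vec_eq_iff mult.commute)

lemma trace_outer: "trace (P ** outer v) = qf P v"
proof -
  have "trace (P ** outer v) = (\<Sum>a\<in>UNIV. \<Sum>b\<in>UNIV. P $ a $ b * (v $ b * cnj (v $ a)))"
    by (simp add: trace_def matrix_matrix_mult_def outer_def)
  also have "\<dots> = qf P v"
    by (simp add: qf_def ip_def matrix_vector_mult_def sum_distrib_left algebra_simps)
  finally show ?thesis .
qed

lemma trace_scaleR_right: "trace ((P::complex^'n^'n) ** (c *\<^sub>R M)) = of_real c * trace (P ** M)"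
  by (simp add: trace_def matrix_matrix_mult_def sum_distrib_left scaleR_mat_nth mult_ac del: vector_scaleR_component)

lemma trace_sum_right: "finite S \<Longrightarrow> trace ((P::complex^'n^'n) ** (\<Sum>i\<in>S. M i)) = (\<Sum>i\<in>S. trace (P ** M i))"
  by (induction S rule: finite_induct) (simp_all add: matrix_add_ldistrib trace_def matrix_matrix_mult_def distrib_left sum.distrib)

lemma psd_diag:
  fixes M :: "complex^'n^'n"
  assumes "psd M" shows "M $ k $ k = of_real (Re (M $ k $ k))" "Re (M $ k $ k) \<ge> 0"
proof -
  have "hermitian_mat M" using assms by (simp add: psd_def)
  then have "cnj (M $ k $ k) = M $ k $ k" using herm_entry[of M k k] by simp
  then show "M $ k $ k = of_real (Re (M $ k $ k))"
    by (metis Reals_cnj_iff of_real_Re)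
  show "Re (M $ k $ k) \<ge> 0" using assms qf_axis[of M k] by (simp add: psd_def) (metis)
qed

lemma psd_zero_diag:
  fixes M :: "complex^'n^'n"
  assumes "psd M" "M $ k $ k = 0" shows "M $ k $ j = 0"
proof (rule ccontr)
  assume a0: "M $ k $ j \<noteq> 0"
  define a where "a = M $ k $ j"
  have herm: "hermitian_mat M" using assms by (simp add: psd_def)
  have jk: "j \<noteq> k" using a0 assms by auto
  have Mjk: "M $ j $ k = cnj a" using herm_entry[OF herm, of k j] a_def by simp
  define b where "b = Re (M $ j $ j)"
  define r where "r = (b + 1) / (2 * (cmod a)^2)"
  define c where "c = - (of_real r * a)"
  define x where "x = c *s axis k 1 + axis j (1::complex)"
  have h1: "qf M x = M $ j $ j + (cnj c * a + c * cnj a)"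
    unfolding x_def qf_add qf_scale qf_axis ip_scale_left ip_axis_left mv_scale
    using assms(2) Mjk by (simp add: mv_axis a_def ip_axis_left)
  have h2: "cnj c * a + c * cnj a = - of_real (2 * r * (cmod a)^2)"
  proof -
    have e: "cnj a * a = of_real ((cmod a)^2)" by (metis complex_norm_square mult.commute of_real_power)
    show ?thesis unfolding c_def using e by (simp add: algebra_simps)
  qed
  have "Re (qf M x) = b - 2 * r * (cmod a)^2" unfolding h1 h2 by (simp add: b_def)
  also have "\<dots> = -1" using a0 a_def by (simp add: r_def field_simps)
  finally show False using assms(1) unfolding psd_def by (metis neg_0_le_iff_le not_one_le_zero)
qed

lemma outer_mv: "outer m *v x = ip m x *s m"
  by (simp add: vec_eq_iff outer_def matrix_vector_mult_def ip_def sum_distrib_left mult_ac)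

lemma ip_cnj': "ip x y = cnj (ip y x)"
  by (simp add: ip_cnj)

lemma qf_outer: "qf (outer m) x = cnj (ip m x) * ip m x"
  by (simp add: qf_def outer_mv ip_scale_right ip_cnj'[of x m])

lemma gram_aux:
  fixes S :: "'n::finite set"
  assumes "finite S"
  shows "\<forall>M::complex^'n^'n. psd M \<and> (\<forall>i j. M $ i $ j \<noteq> 0 \<longrightarrow> i \<in> S \<and> j \<in> S) \<longrightarrow>
          (\<exists>c v. (\<forall>i. c i \<ge> (0::real)) \<and> M = (\<Sum>i\<in>S. c i *\<^sub>R outer (v i)))"
  using assms
proof induction
  case empty
  show ?case
  proof (intro allI impI)
    fix M :: "complex^'n^'n" assume "psd M \<and> (\<forall>i j. M $ i $ j \<noteq> 0 \<longrightarrow> i \<in> {} \<and> j \<in> {})"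
    then have "M = 0" by (auto simp: vec_eq_iff)
    then show "\<exists>c v. (\<forall>i. c i \<ge> (0::real)) \<and> M = (\<Sum>i\<in>{}. c i *\<^sub>R outer (v i))"
      by (intro exI[of _ "\<lambda>_. 0"]) auto
  qed
next
  case (insert k S)
  show ?case
  proof (intro allI impI)
    fix M :: "complex^'n^'n" assume asm: "psd M \<and> (\<forall>i j. M $ i $ j \<noteq> 0 \<longrightarrow> i \<in> insert k S \<and> j \<in> insert k S)"
    then have psdM: "psd M" and supp: "\<And>i j. M $ i $ j \<noteq> 0 \<Longrightarrow> i \<in> insert k S \<and> j \<in> insert k S" by auto
    have herm: "hermitian_mat M" using psdM by (simp add: psd_def)
    define d where "d = Re (M $ k $ k)"
    have Mkk: "M $ k $ k = of_real d" using psd_diag[OF psdM] d_def by simp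
    have d0: "d \<ge> 0" using psd_diag[OF psdM] d_def by simp
    show "\<exists>c v. (\<forall>i. c i \<ge> (0::real)) \<and> M = (\<Sum>i\<in>insert k S. c i *\<^sub>R outer (v i))"
    proof (cases "d = 0")
      case True
      then have row: "M $ k $ j = 0" for j using psd_zero_diag[OF psdM] Mkk by simp
      have col: "M $ j $ k = 0" for j using herm_entry[OF herm, of k j] row[of j] by simp
      have "\<forall>i j. M $ i $ j \<noteq> 0 \<longrightarrow> i \<in> S \<and> j \<in> S"
        using supp row col by blast
      then obtain c v where cv: "\<forall>i. c i \<ge> (0::real)" "M = (\<Sum>i\<in>S. c i *\<^sub>R outer (v i))"
        using insert.IH psdM by blast
      have "(\<Sum>i\<in>insert k S. (c(k:=0)) i *\<^sub>R outer (v i)) = (\<Sum>i\<in>S. (c(k:=0)) i *\<^sub>R outer (v i))"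
        using insert.hyps by simp
      also have "\<dots> = (\<Sum>i\<in>S. c i *\<^sub>R outer (v i))"
        using insert.hyps by (intro sum.cong) auto
      finally show ?thesis using cv by (intro exI[of _ "c(k:=0)"] exI[of _ v]) auto
    next
      case False
      then have dpos: "d > 0" using d0 by simp
      define m where "m = (\<chi> a. M $ a $ k)"
      define M' where "M' = M - (1/d) *\<^sub>R outer m"
      have M'_nth: "M' $ a $ b = M $ a $ b - of_real (1/d) * (M $ a $ k * M $ k $ b)" for a b
        unfolding M'_def using herm_entry[OF herm, of b k]
        by (simp add: scaleR_mat_nth outer_def m_def del: vector_scaleR_component)
      have supp': "\<forall>i j. M' $ i $ j \<noteq> 0 \<longrightarrow> i \<in> S \<and> j \<in> S"
      proof (intro allI impI)
        fix i j assume ne: "M' $ i $ j \<noteq> 0"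
        have "i \<noteq> k"
        proof
          assume "i = k" then have "M' $ i $ j = 0" using M'_nth[of k j] Mkk dpos by simp
          then show False using ne by simp
        qed
        moreover have "j \<noteq> k"
        proof
          assume "j = k" then have "M' $ i $ j = 0" using M'_nth[of i k] Mkk dpos by simp
          then show False using ne by simp
        qed
        moreover have "i \<in> insert k S"
        proof (rule ccontr)
          assume "i \<notin> insert k S"
          then have "M $ i $ j = 0" "M $ i $ k = 0" using supp by blast+
          then show False using ne M'_nth[of i j] by simp
        qed
        moreover have "j \<in> insert k S"
        proof (rule ccontr)
          assume "j \<notin> insert k S"
          then have "M $ i $ j = 0" "M $ k $ j = 0" using supp by blast+
          then show False using ne M'_nth[of i j] by simp
        qed
        ultimately show "i \<in> S \<and> j \<in> S" by simp
      qed
      have hermM': "hermitian_mat M'"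
        using herm outer_herm[of m] unfolding M'_def hermitian_mat_def by (simp add: ct_diff ct_scaleR)
      have qfM': "Re (qf M' x) \<ge> 0" for x
      proof -
        define z where "z = (M *v x) $ k"
        have ipmx: "ip m x = z"
          unfolding z_def ip_def m_def matrix_vector_mult_def
          using herm_entry[OF herm, of k] by simp
        have Mek: "M *v axis k 1 = m" by (simp add: vec_eq_iff mv_axis m_def)
        define cc where "cc = - z / of_real d"
        define y where "y = x + cc *s axis k 1"
        have "qf M y = qf M x + cnj cc * cc * of_real d + cc * cnj z + cnj cc * z"
          unfolding y_def qf_add qf_scale qf_axis mv_scale ip_scale_left ip_scale_right Mek
          using Mkk ipmx ip_cnj'[of x m] ip_axis_left[of k "M *v x"] z_def by simp
        also have "\<dots> = qf M x - z * cnj z / of_real d"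
          unfolding cc_def using dpos by (simp add: field_simps)
        also have "\<dots> = qf M' x"
          unfolding M'_def qf_diff_mat qf_scaleR_mat qf_outer ipmx by (simp add: field_simps)
        finally show ?thesis using psdM unfolding psd_def by metis
      qed
      have "psd M'" using hermM' qfM' by (simp add: psd_def)
      then obtain c v where cv: "\<forall>i. c i \<ge> (0::real)" "M' = (\<Sum>i\<in>S. c i *\<^sub>R outer (v i))"
        using insert.IH supp' by blast
      have "(\<Sum>i\<in>insert k S. (c(k:=1/d)) i *\<^sub>R outer ((v(k:=m)) i)) =
            (1/d) *\<^sub>R outer m + (\<Sum>i\<in>S. (c(k:=1/d)) i *\<^sub>R outer ((v(k:=m)) i))"
        using insert.hyps by simp
      also have "(\<Sum>i\<in>S. (c(k:=1/d)) i *\<^sub>R outer ((v(k:=m)) i)) = (\<Sum>i\<in>S. c i *\<^sub>R outer (v i))"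
        using insert.hyps by (intro sum.cong) auto
      also have "(1/d) *\<^sub>R outer m + (\<Sum>i\<in>S. c i *\<^sub>R outer (v i)) = M"
        using cv(2) unfolding M'_def by (metis add.commute diff_add_cancel)
      finally have "(\<Sum>i\<in>insert k S. (c(k:=1/d)) i *\<^sub>R outer ((v(k:=m)) i)) = M" .
      then show ?thesis using cv dpos
        by (intro exI[of _ "c(k:=1/d)"] exI[of _ "v(k:=m)"]) auto
    qed
  qed
qed

lemma gram:
  fixes M :: "complex^'n^'n"
  assumes "psd M"
  shows "\<exists>c v. (\<forall>i. c i \<ge> (0::real)) \<and> M = (\<Sum>i::'n\<in>UNIV. c i *\<^sub>R outer (v i))"
  using gram_aux[of "UNIV::'n set", rule_format, of M] assms by simp

lemma qf_zero_vec[simp]: "qf P 0 = 0"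
  by (simp add: qf_def ip_def)

lemma pd_psd: "pos_def_mat P \<Longrightarrow> psd P"
  unfolding psd_def pd_iff
  by (metis less_eq_real_def order_refl qf_zero_vec zero_complex.sel(1))

lemma outer_zero[simp]: "outer 0 = 0"
  by (simp add: outer_def vec_eq_iff)

lemma trace_psd_expand:
  fixes P :: "complex^'n^'n"
  assumes "M = (\<Sum>i::'n\<in>UNIV. c i *\<^sub>R outer (v i))"
  shows "Re (trace (P ** M)) = (\<Sum>i\<in>UNIV. c i * Re (qf P (v i)))"
proof -
  have "trace (P ** M) = (\<Sum>i\<in>UNIV. trace (P ** (c i *\<^sub>R outer (v i))))"
    unfolding assms by (rule trace_sum_right) simp
  also have "\<dots> = (\<Sum>i\<in>UNIV. of_real (c i) * qf P (v i))"
    by (simp add: trace_scaleR_right trace_outer)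
  finally show ?thesis by simp
qed

lemma trace_psd_nonneg:
  fixes P M :: "complex^'n^'n"
  assumes "psd P" "psd M"
  shows "Re (trace (P ** M)) \<ge> 0"
proof -
  obtain c v where cv: "\<forall>i. c i \<ge> (0::real)" "M = (\<Sum>i::'n\<in>UNIV. c i *\<^sub>R outer (v i))"
    using gram[OF assms(2)] by blast
  show ?thesis unfolding trace_psd_expand[OF cv(2)]
    using cv(1) assms(1) by (intro sum_nonneg mult_nonneg_nonneg) (auto simp: psd_def)
qed

lemma trace_pd_pos:
  fixes P M :: "complex^'n^'n"
  assumes "pos_def_mat P" "psd M" "M \<noteq> 0"
  shows "Re (trace (P ** M)) > 0"
proof -
  obtain c v where cv: "\<forall>i. c i \<ge> (0::real)" "M = (\<Sum>i::'n\<in>UNIV. c i *\<^sub>R outer (v i))"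
    using gram[OF assms(2)] by blast
  have "\<exists>i. c i \<noteq> 0 \<and> v i \<noteq> 0"
  proof (rule ccontr)
    assume "\<not> ?thesis"
    then have "\<forall>i. c i *\<^sub>R outer (v i) = 0" by auto
    then have "(\<Sum>i::'n\<in>UNIV. c i *\<^sub>R outer (v i)) = 0" by (intro sum.neutral) auto
    then show False using cv(2) assms(3) by simp
  qed
  then obtain i where i: "c i \<noteq> 0" "v i \<noteq> 0" by blast
  have pos: "Re (qf P x) > 0" if "x \<noteq> 0" for x using assms(1) that by (simp add: pd_iff)
  have nn: "Re (qf P x) \<ge> 0" for x using pd_psd[OF assms(1)] by (simp add: psd_def)
  show ?thesis unfolding trace_psd_expand[OF cv(2)]
    apply (rule sum_pos2[of _ i])
    using cv(1) i pos nn by (auto intro!: mult_nonneg_nonneg mult_pos_pos simp: less_le)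
qed

lemma invertible_ct:
  fixes S :: "complex^'n^'n"
  assumes "invertible S" shows "invertible (conj_transpose S)"
proof -
  have "conj_transpose (matrix_inv S) ** conj_transpose S = mat 1"
    using matrix_inv_props(1)[OF assms] by (metis ct_mult ct_one)
  then show ?thesis using invertible_left_inverse by blast
qed

lemma herm_congr:
  fixes S R :: "complex^'n^'n"
  assumes "hermitian_mat R" shows "hermitian_mat (S ** R ** conj_transpose S)"
  using assms unfolding hermitian_mat_def by (simp add: ct_mult matrix_mul_assoc)

lemma psd_congr:
  fixes S R :: "complex^'n^'n"
  assumes "psd R" shows "psd (S ** R ** conj_transpose S)"
  using assms herm_congr[of R S] unfolding psd_def by (simp add: qf_congr)

lemma pd_congr:
  fixes S R :: "complex^'n^'n"
  assumes "pos_def_mat R" "invertible S" shows "pos_def_mat (S ** R ** conj_transpose S)"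
proof -
  have h: "hermitian_mat R" using assms by (simp add: pd_iff)
  obtain T where T: "T ** conj_transpose S = mat 1" using invertible_ct[OF assms(2)] invertible_left_inverse by blast
  have "conj_transpose S *v x \<noteq> 0" if "x \<noteq> 0" for x
  proof
    assume "conj_transpose S *v x = 0"
    then have "T *v (conj_transpose S *v x) = 0" by simp
    then show False using that T by (simp add: matrix_vector_mul_assoc)
  qed
  then show ?thesis using assms herm_congr[OF h] unfolding pd_iff by (simp add: qf_congr)
qed

lemma qf_zero_mat[simp]: "qf 0 x = 0"
  by (simp add: qf_def ip_def matrix_vector_mult_def)

lemma congr_nonzero:
  fixes E Q :: "complex^'n^'n"
  assumes "pos_def_mat Q" "E \<noteq> 0" shows "E ** Q ** conj_transpose E \<noteq> 0"
proof -
  have "conj_transpose E \<noteq> 0" using assms(2) by (metis ct_ct ct_zero)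
  then obtain a j where "conj_transpose E $ a $ j \<noteq> 0" by (auto simp: vec_eq_iff)
  then have "conj_transpose E *v axis j 1 \<noteq> 0" by (metis mv_axis zero_index)
  then have "Re (qf (E ** Q ** conj_transpose E) (axis j 1)) > 0"
    using assms(1) by (simp add: qf_congr pd_iff)
  then show ?thesis by auto
qed

lemma vcar:
  fixes f g :: "real \<Rightarrow> 'a::real_normed_vector"
  assumes ev: "eventually (\<lambda>s. f s - f t = (s - t) *\<^sub>R g s) (at t)" and cont: "isCont g t"
  shows "(f has_vector_derivative g t) (at t)"
  unfolding has_vector_derivative_def has_derivative_iff_norm
proof (intro conjI)
  show "bounded_linear (\<lambda>h. h *\<^sub>R g t)" by (rule bounded_linear_scaleR_left)
  have "((\<lambda>s. g s - g t) \<longlongrightarrow> 0) (at t)"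
    using cont unfolding isCont_def by (simp add: LIM_zero)
  then have lim: "((\<lambda>s. norm (g s - g t)) \<longlongrightarrow> 0) (at t)" by (rule tendsto_norm_zero)
  have "eventually (\<lambda>s. norm (g s - g t) = norm (f s - f t - (s - t) *\<^sub>R g t) / norm (s - t)) (at t)"
  proof -
    have "eventually (\<lambda>s. s \<noteq> t) (at t)" by (simp add: eventually_at_filter)
    with ev show ?thesis
    proof eventually_elim
      case (elim s)
      then have "f s - f t - (s - t) *\<^sub>R g t = (s - t) *\<^sub>R (g s - g t)"
        by (simp add: scaleR_diff_right)
      then show ?case using elim by simp
    qed
  qed
  then show "((\<lambda>y. norm (f y - f t - (y - t) *\<^sub>R g t) / norm (y - t)) \<longlongrightarrow> 0) (at t)"
    by (rule Lim_transform_eventually[OF lim])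
qed

definition mdr :: "(real \<Rightarrow> complex^'n^'n) \<Rightarrow> complex^'n^'n \<Rightarrow> real \<Rightarrow> bool" where
  "mdr F F' t \<longleftrightarrow> (\<forall>i j. ((\<lambda>s. F s $ i $ j) has_vector_derivative F' $ i $ j) (at t))"

lemma mdr_const: "mdr (\<lambda>s. C) 0 t"
  by (simp add: mdr_def)

lemma mdr_mult:
  assumes "mdr F F' t" "mdr G G' t"
  shows "mdr (\<lambda>s. F s ** G s) (F' ** G t + F t ** G') t"
  unfolding mdr_def
proof (intro allI)
  fix i j
  have "((\<lambda>s. \<Sum>k\<in>UNIV. F s $ i $ k * G s $ k $ j) has_vector_derivative
        (\<Sum>k\<in>UNIV. F t $ i $ k * G' $ k $ j + F' $ i $ k * G t $ k $ j)) (at t)"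
    using assms unfolding mdr_def by (intro has_vector_derivative_sum has_vector_derivative_mult) auto
  then show "((\<lambda>s. (F s ** G s) $ i $ j) has_vector_derivative (F' ** G t + F t ** G') $ i $ j) (at t)"
    by (simp add: matrix_matrix_mult_def sum.distrib add.commute)
qed

lemma mdr_trace:
  assumes "mdr F F' t"
  shows "((\<lambda>s. Re (trace (F s))) has_real_derivative Re (trace F')) (at t)"
proof -
  have "((\<lambda>s. \<Sum>i\<in>UNIV. F s $ i $ i) has_vector_derivative (\<Sum>i\<in>UNIV. F' $ i $ i)) (at t)"
    using assms unfolding mdr_def by (intro has_vector_derivative_sum) auto
  then have "((\<lambda>s. Re (\<Sum>i\<in>UNIV. F s $ i $ i)) has_vector_derivative Re (\<Sum>i\<in>UNIV. F' $ i $ i)) (at t)"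
    by (rule bounded_linear.has_vector_derivative[OF bounded_linear_Re])
  then show ?thesis by (simp add: trace_def has_real_derivative_iff_has_vector_derivative)
qed

fun dpow :: "complex^'n^'n \<Rightarrow> complex^'n^'n \<Rightarrow> nat \<Rightarrow> complex^'n^'n" where
  "dpow K K' 0 = 0"
| "dpow K K' (Suc k) = K' ** mat_pow K k + K ** dpow K K' k"

lemma mdr_pow:
  assumes "mdr K K' t"
  shows "mdr (\<lambda>s. mat_pow (K s) k) (dpow (K t) K' k) t"
proof (induction k)
  case 0
  then show ?case using mdr_const by simp
next
  case (Suc k)
  then show ?case using mdr_mult[OF assms Suc] by simp
qed

lemma isCont_det:
  fixes F :: "real \<Rightarrow> complex^'n^'n"
  assumes "\<And>i j. isCont (\<lambda>s. F s $ i $ j) t"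
  shows "isCont (\<lambda>s. det (F s)) t"
  unfolding det_def by (intro continuous_sum continuous_mult continuous_const continuous_prod assms)

lemma matrix_scaleR_left: "(c *\<^sub>R A) ** (B::complex^'n^'n) = c *\<^sub>R (A ** B)"
  by (simp add: vec_eq_iff matrix_matrix_mult_def scaleR_sum_right)
lemma matrix_scaleR_right: "(A::complex^'n^'n) ** (c *\<^sub>R B) = c *\<^sub>R (A ** B)"
  by (simp add: vec_eq_iff matrix_matrix_mult_def scaleR_sum_right)

lemma mat_diff_ldistrib: "(A::complex^'n^'n) ** (B - C) = A ** B - A ** C"
  by (simp add: vec_eq_iff matrix_matrix_mult_def sum_subtractf algebra_simps)
lemma mat_diff_rdistrib: "((B::complex^'n^'n) - C) ** A = B ** A - C ** A"
  by (simp add: vec_eq_iff matrix_matrix_mult_def sum_subtractf algebra_simps)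
lemma mat_add_rdistrib: "((B::complex^'n^'n) + C) ** A = B ** A + C ** A"
  by (simp add: vec_eq_iff matrix_matrix_mult_def sum.distrib algebra_simps)
lemma mat_minus_left: "(- B::complex^'n^'n) ** A = - (B ** A)"
  by (simp add: vec_eq_iff matrix_matrix_mult_def sum_negf)
lemma mat_minus_right: "(A::complex^'n^'n) ** (- B) = - (A ** B)"
  by (simp add: vec_eq_iff matrix_matrix_mult_def sum_negf)
lemma mat_zero_left: "(0::complex^'n^'n) ** A = 0"
  by (simp add: vec_eq_iff matrix_matrix_mult_def)
lemma mat_zero_right: "(A::complex^'n^'n) ** 0 = 0"
  by (simp add: vec_eq_iff matrix_matrix_mult_def)

lemma cramer_entry:
  fixes M :: "complex^'n^'n"
  assumes "invertible M"
  shows "matrix_inv M $ k $ j = det (\<chi> i l. if l = k then axis j 1 $ i else M $ i $ l) / det M"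
proof -
  have d: "det M \<noteq> 0" using assms invertible_det_nz by blast
  have "M *v (matrix_inv M *v axis j 1) = axis j 1"
    by (simp add: matrix_vector_mul_assoc matrix_inv_props[OF assms])
  then have "matrix_inv M *v axis j 1 = (\<chi> k. det (\<chi> i l. if l = k then axis j 1 $ i else M $ i $ l) / det M)"
    by (subst (asm) cramer[OF d])
  then have "(matrix_inv M *v axis j 1) $ k = det (\<chi> i l. if l = k then axis j 1 $ i else M $ i $ l) / det M"
    by simp
  then show ?thesis by (simp add: mv_axis)
qed

lemma isCont_ev_eq:
  assumes "eventually (\<lambda>s. f s = g s) (at t)" "f t = g t" "isCont g t"
  shows "isCont f t"
proof -
  have "(g \<longlongrightarrow> f t) (at t)" using assms(2,3) by (simp add: isCont_def)
  moreover have "eventually (\<lambda>s. g s = f s) (at t)" using assms(1) by (simp add: eq_commute)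
  ultimately show ?thesis unfolding isCont_def by (rule Lim_transform_eventually)
qed

lemma mdr_inv:
  fixes A D :: "complex^'n^'n"
  defines "Y \<equiv> \<lambda>s. A + s *\<^sub>R D"
  defines "W \<equiv> \<lambda>s. matrix_inv (Y s)"
  assumes inv: "invertible (Y t)"
  shows "mdr W (- (W t ** D ** W t)) t"
proof -
  have Ycont: "isCont (\<lambda>s. Y s $ i $ j) t" for i j
    unfolding Y_def by (simp add: continuous_intros)
  have dcont: "isCont (\<lambda>s. det (Y s)) t" by (rule isCont_det[OF Ycont])
  have dt: "det (Y t) \<noteq> 0" using inv invertible_det_nz by blast
  have evinv: "eventually (\<lambda>s. invertible (Y s)) (at t)"
  proof -
    have "eventually (\<lambda>s. det (Y s) \<noteq> 0) (at t)"
      using dcont dt unfolding isCont_def by (rule tendsto_imp_eventually_ne)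
    then show ?thesis by eventually_elim (simp add: invertible_det_nz)
  qed
  have Wcont: "isCont (\<lambda>s. W s $ k $ j) t" for k j
  proof (rule isCont_ev_eq)
    let ?g = "\<lambda>s. det (\<chi> i l. if l = k then axis j 1 $ i else Y s $ i $ l) / det (Y s)"
    show "eventually (\<lambda>s. W s $ k $ j = ?g s) (at t)"
      using evinv by eventually_elim (simp add: W_def cramer_entry)
    show "W t $ k $ j = ?g t" using inv by (simp add: W_def cramer_entry)
    have "isCont (\<lambda>s. det (\<chi> i l. if l = k then axis j 1 $ i else Y s $ i $ l)) t"
      apply (rule isCont_det)
      subgoal for i l by (cases "l = k") (simp_all add: Ycont)
      done
    then show "isCont ?g t" using dcont dt by (intro continuous_divide) auto
  qed
  show ?thesis unfolding mdr_def
  proof (intro allI)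
    fix k j
    let ?g = "\<lambda>s. (- (W s ** D ** W t)) $ k $ j"
    have "eventually (\<lambda>s. W s $ k $ j - W t $ k $ j = (s - t) *\<^sub>R ?g s) (at t)"
      using evinv
    proof eventually_elim
      case (elim s)
      have "W s ** (Y t - Y s) ** W t = W s ** Y t ** W t - W s ** Y s ** W t"
        by (simp only: mat_diff_ldistrib mat_diff_rdistrib)
      also have "\<dots> = W s - W t"
        using matrix_inv_props[OF inv] matrix_inv_props[OF elim]
        by (simp add: W_def matrix_mul_assoc[symmetric])
      moreover have "Y t - Y s = (t - s) *\<^sub>R D" by (simp add: Y_def scaleR_diff_left)
      ultimately have "W s - W t = W s ** ((t - s) *\<^sub>R D) ** W t" by simp
      then have "W s - W t = (t - s) *\<^sub>R (W s ** D ** W t)"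
        by (simp only: matrix_scaleR_left matrix_scaleR_right)
      then have "(W s - W t) $ k $ j = ((t - s) *\<^sub>R (W s ** D ** W t)) $ k $ j" by simp
      then show ?case by (simp add: algebra_simps)
    qed
    moreover have "isCont ?g t"
      unfolding matrix_matrix_mult_def using Wcont by (simp add: continuous_intros)
    ultimately show "((\<lambda>s. W s $ k $ j) has_vector_derivative (- (W t ** D ** W t)) $ k $ j) (at t)"
      by (rule vcar)
  qed
qed

lemma mat_pow_add: "mat_pow (K::complex^'n^'n) a ** mat_pow K b = mat_pow K (a + b)"
  by (induction a) (simp_all add: matrix_mul_assoc[symmetric])

lemma mat_pow_Suc_right: "mat_pow (K::complex^'n^'n) (Suc k) = mat_pow K k ** K"
  using mat_pow_add[of K k 1] by simp

lemma mat_sum_ldistrib: "finite S \<Longrightarrow> (K::complex^'n^'n) ** (\<Sum>i\<in>S. M i) = (\<Sum>i\<in>S. K ** M i)"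
  by (induction S rule: finite_induct) (simp_all add: matrix_add_ldistrib mat_zero_right)

lemma mat_sum_rdistrib: "finite S \<Longrightarrow> (\<Sum>i\<in>S. M i :: complex^'n^'n) ** (K::complex^'n^'n) = (\<Sum>i\<in>S. M i ** K)"
  by (induction S rule: finite_induct) (simp_all add: mat_add_rdistrib mat_zero_left)

lemma trace_sum: "finite S \<Longrightarrow> trace (\<Sum>i\<in>S. M i :: complex^'n^'n) = (\<Sum>i\<in>S. trace (M i))"
  by (induction S rule: finite_induct) (simp_all add: trace_def sum.distrib)

lemma dpow_sum:
  "dpow (K::complex^'n^'n) K' k = (\<Sum>j<k. mat_pow K j ** K' ** mat_pow K (k - 1 - j))"
proof (induction k)
  case 0
  then show ?case by simp
next
  case (Suc k)
  have "dpow K K' (Suc k) = K' ** mat_pow K k + (\<Sum>j<k. K ** (mat_pow K j ** K' ** mat_pow K (k - 1 - j)))"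
    by (simp add: Suc mat_sum_ldistrib)
  also have "\<dots> = (\<Sum>j<Suc k. mat_pow K j ** K' ** mat_pow K (Suc k - 1 - j))"
    unfolding sum.lessThan_Suc_shift by (simp add: matrix_mul_assoc)
  finally show ?case .
qed

lemma trace_dpow:
  "trace (dpow (K::complex^'n^'n) K' k) = of_nat k * trace (mat_pow K (k - 1) ** K')"
proof -
  have "trace (mat_pow K j ** K' ** mat_pow K (k - 1 - j)) = trace (mat_pow K (k - 1) ** K')"
    if "j < k" for j
  proof -
    have "trace (mat_pow K j ** K' ** mat_pow K (k - 1 - j)) = trace (mat_pow K (k - 1 - j) ** (mat_pow K j ** K'))"
      by (rule trace_mul_sym)
    also have "\<dots> = trace (mat_pow K (k - 1 - j + j) ** K')"
      by (simp add: matrix_mul_assoc mat_pow_add)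
    finally show ?thesis using that by simp
  qed
  then show ?thesis by (simp add: dpow_sum trace_sum)
qed

lemma pd_inv_props:
  fixes Y :: "complex^'n^'n"
  assumes "pos_def_mat Y"
  shows "Y ** matrix_inv Y = mat 1" "matrix_inv Y ** Y = mat 1"
  using matrix_inv_props[OF pd_invertible[OF assms]] by auto

lemma pd_herm: "pos_def_mat Y \<Longrightarrow> conj_transpose Y = Y"
  by (simp add: pd_iff hermitian_mat_def)

lemma pd_inv:
  fixes Y :: "complex^'n^'n"
  assumes "pos_def_mat Y"
  shows "pos_def_mat (matrix_inv Y)"
proof -
  let ?W = "matrix_inv Y"
  note i = pd_inv_props[OF assms]
  have "conj_transpose ?W = conj_transpose ?W ** (Y ** ?W)" using i by simp
  also have "\<dots> = conj_transpose (Y ** ?W) ** ?W"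
    by (simp add: ct_mult pd_herm[OF assms] matrix_mul_assoc)
  also have "\<dots> = ?W" using i by simp
  finally have hW: "conj_transpose ?W = ?W" .
  have invW: "invertible ?W" using i invertible_def by blast
  have "pos_def_mat (?W ** Y ** conj_transpose ?W)" by (rule pd_congr[OF assms invW])
  also have "?W ** Y ** conj_transpose ?W = ?W" using i hW by simp
  finally show ?thesis .
qed

lemma pd_P:
  fixes X W :: "complex^'n^'n"
  assumes X: "pos_def_mat X" and W: "pos_def_mat W"
  shows "pos_def_mat (mat_pow (X ** W) k ** X)"
proof (induction k rule: less_induct)
  case (less k)
  have invK: "invertible (X ** W)" using pd_invertible[OF X] pd_invertible[OF W] by (rule invertible_mult)
  show ?case
  proof (cases k)
    case 0 then show ?thesis using X by simp
  next
    case (Suc k1)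
    show ?thesis
    proof (cases k1)
      case 0
      have "pos_def_mat (X ** W ** conj_transpose X)" by (rule pd_congr[OF W pd_invertible[OF X]])
      then show ?thesis using Suc 0 pd_herm[OF X] by simp
    next
      case (Suc k2)
      have "pos_def_mat ((X ** W) ** (mat_pow (X ** W) k2 ** X) ** conj_transpose (X ** W))"
        using less Suc \<open>k = Suc k1\<close> by (intro pd_congr invK) auto
      also have "(X ** W) ** (mat_pow (X ** W) k2 ** X) ** conj_transpose (X ** W)
               = (X ** W) ** (mat_pow (X ** W) k2 ** (X ** W)) ** X"
        by (simp add: ct_mult pd_herm[OF X] pd_herm[OF W] matrix_mul_assoc)
      also have "\<dots> = mat_pow (X ** W) k ** X"
        using Suc \<open>k = Suc k1\<close> by (simp add: mat_pow_Suc_right[symmetric])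
      finally show ?thesis .
    qed
  qed
qed

lemma tr_PEQE_nonneg:
  fixes P Q E :: "complex^'n^'n"
  assumes "pos_def_mat P" "pos_def_mat Q" "hermitian_mat E"
  shows "Re (trace (P ** E ** (Q ** E))) \<ge> 0"
proof -
  have "P ** E ** (Q ** E) = P ** (E ** Q ** conj_transpose E)"
    using assms(3) by (simp add: hermitian_mat_def matrix_mul_assoc)
  then show ?thesis
    using trace_psd_nonneg[OF pd_psd[OF assms(1)] psd_congr[OF pd_psd[OF assms(2)], of E]] by simp
qed

lemma tr_PEQE_pos:
  fixes P Q E :: "complex^'n^'n"
  assumes "pos_def_mat P" "pos_def_mat Q" "hermitian_mat E" "E \<noteq> 0"
  shows "Re (trace (P ** E ** (Q ** E))) > 0"
proof -
  have "P ** E ** (Q ** E) = P ** (E ** Q ** conj_transpose E)"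
    using assms(3) by (simp add: hermitian_mat_def matrix_mul_assoc)
  then show ?thesis
    using trace_pd_pos[OF assms(1) psd_congr[OF pd_psd[OF assms(2)], of E] congr_nonzero[OF assms(2,4)]] by simp
qed

lemma trace_neg: "trace (- (A::complex^'n^'n)) = - trace A"
  by (simp add: trace_def sum_negf)

lemma hpp_neg:
  fixes X Y D :: "complex^'n^'n"
  assumes X: "pos_def_mat X" and Y: "pos_def_mat Y" and hD: "hermitian_mat D" and D0: "D \<noteq> 0"
    and n: "n \<ge> 1"
  defines "W \<equiv> matrix_inv Y"
  defines "K \<equiv> X ** W"
  shows "Re (trace (dpow K (- (K ** D ** W)) n ** D ** W + mat_pow K n ** D ** (- (W ** D ** W)))) < 0"
proof -
  define E where "E = W ** D ** W"
  define Q where "Q = (\<lambda>m. case m of 0 \<Rightarrow> Y | Suc m' \<Rightarrow> mat_pow K m' ** X)"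
  note i = pd_inv_props[OF Y, folded W_def]
  have Wpd: "pos_def_mat W" using pd_inv[OF Y] W_def by simp
  have Ppd: "pos_def_mat (mat_pow K j ** X)" for j unfolding K_def by (rule pd_P[OF X Wpd])
  have Qpd: "pos_def_mat (Q m)" for m using Ppd Y by (cases m) (auto simp: Q_def)
  have hE: "hermitian_mat E"
    using hD pd_herm[OF Wpd] unfolding E_def hermitian_mat_def by (simp add: ct_mult matrix_mul_assoc)
  have E0: "E \<noteq> 0"
  proof
    assume "E = 0"
    then have "Y ** E ** Y = 0" by (simp add: mat_zero_left mat_zero_right)
    moreover have "Y ** E ** Y = D" using i unfolding E_def
      by (simp add: matrix_mul_assoc) (simp add: matrix_mul_assoc[symmetric])
    ultimately show False using D0 by simp
  qed
  have KQ: "mat_pow K m ** D ** W = Q m ** E" for m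
  proof (cases m)
    case 0 then show ?thesis using i by (simp add: Q_def E_def matrix_mul_assoc)
  next
    case (Suc m')
    then have "mat_pow K m = mat_pow K m' ** K" using mat_pow_Suc_right by simp
    then have "mat_pow K m ** D ** W = mat_pow K m' ** X ** (W ** D ** W)"
      by (simp add: K_def matrix_mul_assoc)
    then show ?thesis using Suc by (simp add: Q_def E_def)
  qed
  have t1: "mat_pow K j ** (- (K ** D ** W)) ** mat_pow K m ** D ** W = - ((mat_pow K j ** X) ** E ** (Q m ** E))"
    for j m
  proof -
    have "mat_pow K j ** (- (K ** D ** W)) ** mat_pow K m ** D ** W
          = - ((mat_pow K j ** X) ** E ** (mat_pow K m ** D ** W))"
      by (simp add: mat_minus_left mat_minus_right matrix_mul_assoc K_def E_def)
    then show ?thesis by (simp add: KQ)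
  qed
  have t2: "mat_pow K n ** D ** (- (W ** D ** W)) = - (Q n ** E ** (Q 0 ** E))"
  proof -
    have "mat_pow K n ** D ** (- (W ** D ** W)) = - ((mat_pow K n ** D ** W) ** (D ** W))"
      by (simp add: mat_minus_right matrix_mul_assoc)
    also have "D ** W = Q 0 ** E" using KQ[of 0] by simp
    finally show ?thesis by (simp add: KQ)
  qed
  have "dpow K (- (K ** D ** W)) n ** D ** W
        = (\<Sum>j<n. mat_pow K j ** (- (K ** D ** W)) ** mat_pow K (n - 1 - j) ** D ** W)"
    by (simp add: dpow_sum mat_sum_rdistrib)
  also have "\<dots> = (\<Sum>j<n. - ((mat_pow K j ** X) ** E ** (Q (n - 1 - j) ** E)))"
    by (simp add: t1)
  finally have s1: "Re (trace (dpow K (- (K ** D ** W)) n ** D ** W))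
        = - (\<Sum>j<n. Re (trace ((mat_pow K j ** X) ** E ** (Q (n - 1 - j) ** E))))"
    by (simp add: trace_sum sum_negf trace_neg)
  have "(\<Sum>j<n. Re (trace ((mat_pow K j ** X) ** E ** (Q (n - 1 - j) ** E)))) \<ge> 0"
    by (intro sum_nonneg tr_PEQE_nonneg Ppd Qpd hE)
  moreover have "Re (trace (Q n ** E ** (Q 0 ** E))) > 0"
    by (intro tr_PEQE_pos Qpd hE E0)
  ultimately show ?thesis
    using s1 t2 by (simp add: trace_add trace_neg trace_sub)
qed

lemma strict_1d:
  fixes g h :: "real \<Rightarrow> real"
  assumes gd: "\<And>s. 0 \<le> s \<Longrightarrow> s \<le> 1 \<Longrightarrow> (g has_real_derivative h s) (at s)"
    and hd: "\<And>s. 0 \<le> s \<Longrightarrow> s \<le> 1 \<Longrightarrow> \<exists>y. (h has_real_derivative y) (at s) \<and> y > 0"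
    and v: "0 < v" "v < 1"
  shows "g v < (1 - v) * g 0 + v * g 1"
proof -
  have hinc: "h a < h b" if "0 \<le> a" "a < b" "b \<le> 1" for a b
    using that by (intro DERIV_pos_imp_increasing[OF \<open>a < b\<close>] hd) auto
  have gdiff: "g differentiable (at x)" if "0 \<le> x" "x \<le> 1" for x
    using gd[OF that] real_differentiable_def by blast
  have gcont: "continuous_on {a..b} g" if "0 \<le> a" "b \<le> 1" for a b
  proof (rule DERIV_atLeastAtMost_imp_continuous_on)
    fix x assume "a \<le> x" "x \<le> b"
    then show "\<exists>y. (g has_real_derivative y) (at x)" using gd[of x] that by auto
  qed
  obtain l1 z1 where z1: "0 < z1" "z1 < v" "(g has_real_derivative l1) (at z1)" "g v - g 0 = (v - 0) * l1"
    using MVT[OF v(1) gcont[of 0 v]] gdiff v by force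
  obtain l2 z2 where z2: "v < z2" "z2 < 1" "(g has_real_derivative l2) (at z2)" "g 1 - g v = (1 - v) * l2"
    using MVT[OF v(2) gcont[of v 1]] gdiff v by force
  have l1: "l1 = h z1" using DERIV_unique[OF z1(3) gd[of z1]] z1 v by simp
  have l2: "l2 = h z2" using DERIV_unique[OF z2(3) gd[of z2]] z2 v by simp
  have lt: "h z1 < h z2" using hinc[of z1 z2] z1 z2 by simp
  have g0: "g 0 = g v - v * h z1" using z1(4) l1 by simp
  have g1: "g 1 = g v + (1 - v) * h z2" using z2(4) l2 by simp
  have "(1 - v) * g 0 + v * g 1 - g v = v * (1 - v) * (h z2 - h z1)"
    unfolding g0 g1 by (simp add: algebra_simps)
  moreover have "v * (1 - v) * (h z2 - h z1) > 0" using v lt by simp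
  ultimately show ?thesis by simp
qed

lemma pd_comb:
  fixes A B :: "complex^'n^'n"
  assumes "pos_def_mat A" "pos_def_mat B" "0 \<le> s" "s \<le> 1"
  shows "pos_def_mat ((1 - s) *\<^sub>R A + s *\<^sub>R B)"
  unfolding pd_iff
proof (intro conjI allI impI)
  show "hermitian_mat ((1 - s) *\<^sub>R A + s *\<^sub>R B)"
    using assms(1,2) by (simp add: hermitian_mat_def ct_add ct_scaleR pd_iff)
  fix x :: "complex^'n" assume "x \<noteq> 0"
  then have a: "Re (qf A x) > 0" and b: "Re (qf B x) > 0" using assms(1,2) by (auto simp: pd_iff)
  have "Re (qf ((1 - s) *\<^sub>R A + s *\<^sub>R B) x) = (1 - s) * Re (qf A x) + s * Re (qf B x)"
    by (simp add: qf_add_mat qf_scaleR_mat)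
  moreover have "(1 - s) * Re (qf A x) + s * Re (qf B x) > 0"
  proof (cases "s = 1")
    case True then show ?thesis using b by simp
  next
    case False
    then have "(1 - s) * Re (qf A x) > 0" using a assms(4) by simp
    moreover have "s * Re (qf B x) \<ge> 0" using b assms(3) by simp
    ultimately show ?thesis by simp
  qed
  ultimately show "Re (qf ((1 - s) *\<^sub>R A + s *\<^sub>R B) x) > 0" by simp
qed

lemma line_main:
  fixes X A B :: "complex^'n^'n"
  assumes X: "pos_def_mat X" and A: "pos_def_mat A" and B: "pos_def_mat B" and AB: "A \<noteq> B"
    and n: "n \<ge> 1" and v: "0 < v" "v < 1"
  shows "f_Xn X n ((1 - v) *\<^sub>R A + v *\<^sub>R B) < (1 - v) * f_Xn X n A + v * f_Xn X n B"
proof -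
  define D where "D = B - A"
  define Y where "Y = (\<lambda>s. A + s *\<^sub>R D)"
  define W where "W = (\<lambda>s. matrix_inv (Y s))"
  define K where "K = (\<lambda>s. X ** W s)"
  define g where "g = (\<lambda>s. Re (trace (mat_pow (K s) n)))"
  define h where "h = (\<lambda>s. - real n * Re (trace (mat_pow (K s) n ** D ** W s)))"
  have Yc: "Y s = (1 - s) *\<^sub>R A + s *\<^sub>R B" for s by (simp add: Y_def D_def algebra_simps)
  have Ypd: "pos_def_mat (Y s)" if "0 \<le> s" "s \<le> 1" for s
    unfolding Yc using pd_comb[OF A B that] .
  have hD: "hermitian_mat D" using A B unfolding D_def hermitian_mat_def by (simp add: ct_diff pd_herm)
  have D0: "D \<noteq> 0" using AB D_def by simp
  have gf: "g s = f_Xn X n (Y s)" for s by (simp add: g_def f_Xn_def K_def W_def)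
  have ders: "(g has_real_derivative h s) (at s) \<and> (\<exists>y. (h has_real_derivative y) (at s) \<and> y > 0)"
    if s: "0 \<le> s" "s \<le> 1" for s
  proof -
    have inv: "invertible (Y s)" using pd_invertible[OF Ypd[OF s]] .
    have mW: "mdr W (- (W s ** D ** W s)) s"
      using mdr_inv[where A=A and D=D and t=s] inv unfolding W_def Y_def by simp
    have mK0: "mdr K (0 ** W s + X ** (- (W s ** D ** W s))) s"
      unfolding K_def by (rule mdr_mult[OF mdr_const mW])
    have K'eq: "0 ** W s + X ** (- (W s ** D ** W s)) = - (K s ** D ** W s)"
      by (simp add: mat_zero_left mat_minus_right K_def matrix_mul_assoc)
    have mK: "mdr K (- (K s ** D ** W s)) s" using mK0 K'eq by simp
    have mP: "mdr (\<lambda>s. mat_pow (K s) n) (dpow (K s) (- (K s ** D ** W s)) n) s"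
      by (rule mdr_pow[OF mK])
    have gder: "(g has_real_derivative Re (trace (dpow (K s) (- (K s ** D ** W s)) n))) (at s)"
      unfolding g_def by (rule mdr_trace[OF mP])
    have pn: "mat_pow (K s) (n - Suc 0) ** K s = mat_pow (K s) n"
      using mat_pow_Suc_right[of "K s" "n - 1"] n by simp
    have "Re (trace (dpow (K s) (- (K s ** D ** W s)) n)) = h s"
      unfolding trace_dpow h_def
      by (simp add: mat_minus_right trace_neg matrix_mul_assoc pn)
    then have g1: "(g has_real_derivative h s) (at s)" using gder by simp
    have mPD: "mdr (\<lambda>s. mat_pow (K s) n ** D) (dpow (K s) (- (K s ** D ** W s)) n ** D + mat_pow (K s) n ** 0) s"
      by (rule mdr_mult[OF mP mdr_const])
    have mF: "mdr (\<lambda>s. mat_pow (K s) n ** D ** W s)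
       ((dpow (K s) (- (K s ** D ** W s)) n ** D + mat_pow (K s) n ** 0) ** W s + mat_pow (K s) n ** D ** (- (W s ** D ** W s))) s"
      by (rule mdr_mult[OF mPD mW])
    define T where "T = dpow (K s) (- (K s ** D ** W s)) n ** D ** W s + mat_pow (K s) n ** D ** (- (W s ** D ** W s))"
    have Teq: "(dpow (K s) (- (K s ** D ** W s)) n ** D + mat_pow (K s) n ** 0) ** W s + mat_pow (K s) n ** D ** (- (W s ** D ** W s)) = T"
      by (simp add: T_def mat_zero_right)
    have "((\<lambda>s. Re (trace (mat_pow (K s) n ** D ** W s))) has_real_derivative Re (trace T)) (at s)"
      using mdr_trace[OF mF] Teq by simp
    then have hder: "(h has_real_derivative (- real n * Re (trace T))) (at s)"
      unfolding h_def by (rule DERIV_cmult)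
    have "Re (trace T) < 0"
      unfolding T_def K_def W_def by (rule hpp_neg[OF X Ypd[OF s] hD D0 n])
    then have "- real n * Re (trace T) > 0" using n by (simp add: mult_pos_neg)
    with g1 hder show ?thesis by blast
  qed
  have "g v < (1 - v) * g 0 + v * g 1"
    by (rule strict_1d[OF _ _ v]) (use ders in auto)
  moreover have "Y 0 = A" "Y 1 = B" by (simp_all add: Y_def D_def)
  ultimately show ?thesis unfolding gf Yc[symmetric] by simp
qed

theorem lemma5p2:
  fixes X :: "complex^'m^'m" and n :: nat
  assumes "pos_def_mat X" and "n \<ge> 1"
  shows "strict_convex_on {Y :: complex^'m^'m. pos_def_mat Y} (f_Xn X n)"
proof -
  have cvx: "convex {Y :: complex^'m^'m. pos_def_mat Y}"
    unfolding convex_def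
  proof (intro ballI allI impI)
    fix x y :: "complex^'m^'m" and u v :: real
    assume x: "x \<in> {Y. pos_def_mat Y}" and y: "y \<in> {Y. pos_def_mat Y}"
      and uv: "0 \<le> u" "0 \<le> v" "u + v = 1"
    then have u: "u = 1 - v" and "v \<le> 1" by auto
    then show "u *\<^sub>R x + v *\<^sub>R y \<in> {Y. pos_def_mat Y}"
      unfolding u using pd_comb[of x y v] x y uv by simp
  qed
  show ?thesis
    unfolding strict_convex_on_def
  proof (intro conjI cvx ballI allI impI)
    fix x y :: "complex^'m^'m" and u v :: real
    assume x: "x \<in> {Y. pos_def_mat Y}" and y: "y \<in> {Y. pos_def_mat Y}" and xy: "x \<noteq> y"
      and uv: "0 < u" "0 < v" "u + v = 1"
    then have u: "u = 1 - v" and v1: "v < 1" by auto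
    show "f_Xn X n (u *\<^sub>R x + v *\<^sub>R y) < u * f_Xn X n x + v * f_Xn X n y"
      unfolding u using line_main[OF assms(1) _ _ xy assms(2) uv(2) v1] x y by simp
  qed
qed

end
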